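(* Let $c>1$ and $d>1$ be irrational numbers, let $c'_n=[c^{-1}n]$, let $k$ be a nonnegative integer, and for a positive integer $m$ let $x=[cm]$. Then, as $m\to\infty$, \begin{align*} \int_1^x \frac{[d^{-1}([c^{-1}([t]+1)]+k+1)]}{t^2}\,dt =\;& (cd)^{-1}(\log m + \log c + \gamma)+d^{-1}(k+1)\\ & -\sum_{n=1}^\infty \frac{d^{-1}\{c^{-1}(n+1)\}+\{d^{-1}(c'_{n+1}+k+1)\}}{n(n+1)} + O\left(\frac{1}{m}\right), \end{align*} where $\gamma$ is Euler's constant.
   Context: $[x]$ is the greatest integer not exceeding $x$ and $\{x\}=x-[x]$. The implied constant may depend on $c,d,k$. *)

theory Defs
  imports "HOL-Analysis.Analysis" "HOL-Library.Landau_Symbols"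
begin

end

theory Submission imports Defs "HOL-Real_Asymp.Real_Asymp" begin

lemma step_int:
  fixes B :: "int \<Rightarrow> real"
  shows "((\<lambda>t. B \<lfloor>t\<rfloor> / t\<^sup>2) has_integral
          (\<Sum>n<N. B (int (Suc n)) / (real (Suc n) * (real (Suc n) + 1)))) {1..real (Suc N)}"
proof (induction N)
  case 0
  then show ?case by (auto intro: has_integral_refl)
next
  case (Suc N)
  have piece: "((\<lambda>t. B \<lfloor>t\<rfloor> / t\<^sup>2) has_integral
      B (int (Suc N)) / (real (Suc N) * (real (Suc N) + 1))) {real (Suc N)..real (Suc (Suc N))}"
  proof -
    have "((\<lambda>t. B (int (Suc N)) / t\<^sup>2) has_integral
        ((\<lambda>t. - B (int (Suc N)) / t) (real (Suc (Suc N))) - (\<lambda>t. - B (int (Suc N)) / t) (real (Suc N))))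
        {real (Suc N)..real (Suc (Suc N))}"
      apply (rule fundamental_theorem_of_calculus)
       apply simp
      apply (auto intro!: derivative_eq_intros simp: has_real_derivative_iff_has_vector_derivative[symmetric] power2_eq_square)
      done
    moreover have "(\<lambda>t. - B (int (Suc N)) / t) (real (Suc (Suc N))) - (\<lambda>t. - B (int (Suc N)) / t) (real (Suc N))
       = B (int (Suc N)) / (real (Suc N) * (real (Suc N) + 1))"
      by (simp add: field_simps)
    ultimately have h: "((\<lambda>t. B (int (Suc N)) / t\<^sup>2) has_integral
      B (int (Suc N)) / (real (Suc N) * (real (Suc N) + 1))) {real (Suc N)..real (Suc (Suc N))}"
      by simp
    show ?thesis
    proof (rule has_integral_spike_finite_eq[where S="{real (Suc (Suc N))}", THEN iffD1, OF _ _ h])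
      fix t assume t: "t \<in> {real (Suc N)..real (Suc (Suc N))} - {real (Suc (Suc N))}"
      then have "\<lfloor>t\<rfloor> = int (Suc N)" by (auto simp: floor_eq_iff)
      then show "B \<lfloor>t\<rfloor> / t\<^sup>2 = B (int (Suc N)) / t\<^sup>2" by simp
    qed simp
  qed
  have "((\<lambda>t. B \<lfloor>t\<rfloor> / t\<^sup>2) has_integral
      (\<Sum>n<N. B (int (Suc n)) / (real (Suc n) * (real (Suc n) + 1))) +
      B (int (Suc N)) / (real (Suc N) * (real (Suc N) + 1))) {1..real (Suc (Suc N))}"
    by (rule has_integral_combine[OF _ _ Suc piece]) auto
  then show ?case by simp
qed

lemma tele: "(\<Sum>n<N. 1 / (real (Suc n) * (real (Suc n) + 1))) = 1 - 1 / (real N + 1)"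
proof (induction N)
  case (Suc N)
  have "(\<Sum>n<Suc N. 1 / (real (Suc n) * (real (Suc n) + 1))) = (1 - 1 / (real N + 1)) + 1 / (real (Suc N) * (real (Suc N) + 1))"
    using Suc by simp
  also have "\<dots> = 1 - 1 / (real (Suc N) + 1)"
  proof -
    have g: "(1 - 1/a) + 1/(a*(a+1)) = 1 - 1/(a+1)" if "a > 0" for a :: real
    proof -
      have "a + a*a > 0" using that by (simp add: add_pos_pos)
      then show ?thesis using that by (simp add: field_simps)
    qed
    show ?thesis using g[of "real N + 1"] by (simp add: algebra_simps)
  qed
  finally show ?case .
qed simp

lemma tail_bound:
  fixes G :: "nat \<Rightarrow> real"
  assumes "\<And>n. 0 \<le> G n" "\<And>n. G n \<le> 2 / (real (Suc n) * (real (Suc n) + 1))"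
  shows "summable G" "0 \<le> suminf G - (\<Sum>n<N. G n)" "suminf G - (\<Sum>n<N. G n) \<le> 2 / (real N + 1)"
proof -
  have tel: "(\<lambda>n. 2 / (real n + 1) - 2 / (real (Suc n) + 1)) sums (2 / (real 0 + 1) - 0)"
    by (rule telescope_sums') real_asymp
  have eq: "(\<lambda>n. 2 / (real n + 1) - 2 / (real (Suc n) + 1)) = (\<lambda>n. 2 / (real (Suc n) * (real (Suc n) + 1)))"
    by (auto simp: field_simps)
  have sb: "summable (\<lambda>n. 2 / (real (Suc n) * (real (Suc n) + 1)))"
    using tel eq sums_summable by metis
  show sG: "summable G"
    by (rule summable_comparison_test'[OF sb]) (use assms in auto)
  have split: "suminf G - (\<Sum>n<N. G n) = (\<Sum>n. G (n + N))"
    using suminf_split_initial_segment[OF sG, of N] by simp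
  have sGN: "summable (\<lambda>n. G (n + N))" using sG by (simp add: summable_iff_shift)
  show "0 \<le> suminf G - (\<Sum>n<N. G n)"
    unfolding split by (rule suminf_nonneg[OF sGN]) (use assms in auto)
  have tel2: "(\<lambda>n. 2 / (real (n + N) + 1) - 2 / (real (Suc (n + N)) + 1)) sums (2 / (real (0 + N) + 1) - 0)"
  proof -
    have "(\<lambda>n. 2 / (real (n + N) + 1)) \<longlonglongrightarrow> 0" by real_asymp
    from telescope_sums'[OF this] show ?thesis by simp
  qed
  have eq2: "(\<lambda>n. 2 / (real (n + N) + 1) - 2 / (real (Suc (n + N)) + 1)) = (\<lambda>n. 2 / (real (Suc (n + N)) * (real (Suc (n + N)) + 1)))"
    by (auto simp: field_simps)
  have tel3: "(\<lambda>n. 2 / (real (Suc (n + N)) * (real (Suc (n + N)) + 1))) sums (2/(real N+1))"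
    using tel2 unfolding eq2 by simp
  have "(\<Sum>n. G (n + N)) \<le> 2 / (real N + 1)"
    by (rule sums_le[OF _ summable_sums[OF sGN] tel3], rule assms(2))
  then show "suminf G - (\<Sum>n<N. G n) \<le> 2 / (real N + 1)" using split by simp
qed

theorem lemma10:
  fixes c d :: real and k :: nat
  assumes "c > 1" and "d > 1" and "c \<notin> \<rat>" and "d \<notin> \<rat>"
  shows "(\<lambda>m::nat.
      integral {1..real_of_int \<lfloor>c * real m\<rfloor>}
        (\<lambda>t. real_of_int \<lfloor>(real_of_int \<lfloor>(real_of_int \<lfloor>t\<rfloor> + 1) / c\<rfloor> + real k + 1) / d\<rfloor> / t\<^sup>2)
      - ( (1 / (c * d)) * (ln (real m) + ln c + euler_mascheroni) + (real k + 1) / d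
          - (\<Sum>n. (frac ((real (Suc n) + 1) / c) / d
                     + frac ((real_of_int \<lfloor>(real (Suc n) + 1) / c\<rfloor> + real k + 1) / d))
                    / (real (Suc n) * (real (Suc n) + 1)))))
    \<in> O(\<lambda>m. 1 / real m)"
proof -
  define F where "F n = frac ((real n + 1) / c) / d + frac ((real_of_int \<lfloor>(real n + 1) / c\<rfloor> + real k + 1) / d)" for n :: nat
  define G where "G n = F (Suc n) / (real (Suc n) * (real (Suc n) + 1))" for n
  define B :: "int \<Rightarrow> real" where "B j = real_of_int \<lfloor>(real_of_int \<lfloor>(real_of_int j + 1) / c\<rfloor> + real k + 1) / d\<rfloor>" for j
  have sumeq: "(\<Sum>n. (frac ((real (Suc n) + 1) / c) / d
                     + frac ((real_of_int \<lfloor>(real (Suc n) + 1) / c\<rfloor> + real k + 1) / d))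
                    / (real (Suc n) * (real (Suc n) + 1))) = suminf G"
    unfolding G_def F_def by simp
  have inteq: "(\<lambda>t. real_of_int \<lfloor>(real_of_int \<lfloor>(real_of_int \<lfloor>t\<rfloor> + 1) / c\<rfloor> + real k + 1) / d\<rfloor> / t\<^sup>2)
     = (\<lambda>t. B \<lfloor>t\<rfloor> / t\<^sup>2)" unfolding B_def by simp
  have F0: "0 \<le> F n" for n unfolding F_def using assms(2) by (simp add: frac_ge_0)
  have F2: "F n \<le> 2" for n
  proof -
    have "frac ((real n + 1) / c) / d \<le> 1" using assms(2) frac_lt_1[of "(real n + 1) / c"] frac_ge_0[of "(real n + 1) / c"]
      by (simp add: divide_simps)
    moreover have "frac ((real_of_int \<lfloor>(real n + 1) / c\<rfloor> + real k + 1) / d) \<le> 1"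
      using frac_lt_1 less_imp_le by blast
    ultimately show ?thesis unfolding F_def by simp
  qed
  have G0: "0 \<le> G n" for n unfolding G_def using F0 by simp
  have G2: "G n \<le> 2 / (real (Suc n) * (real (Suc n) + 1))" for n
    unfolding G_def using F2[of "Suc n"] by (simp add: divide_right_mono)
  note tb = tail_bound[of G, OF G0 G2]
  have Bdec: "B (int j) = ((real j + 1) / c + real k + 1) / d - F j" for j :: nat
    unfolding B_def F_def frac_def using assms(1,2) by (simp add: field_simps)
  have termeq: "B (int (Suc n)) / (real (Suc n) * (real (Suc n) + 1))
     = 1 / (c * d) * inverse (real (Suc n)) + (real k + 1) / d * (1 / (real (Suc n) * (real (Suc n) + 1))) - G n" for n
  proof -
    have gen: "(((a + 1) / c + K) / d - Fv) / (a * (a + 1)) = 1 / (c * d) * inverse a + K / d * (1 / (a * (a + 1))) - Fv / (a * (a + 1))"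
      if "a > 0" for a K Fv :: real
    proof -
      have "(((a + 1) / c + K) / d - Fv) / (a * (a + 1)) = ((a+1)/(c*d))/(a*(a+1)) + (K/d)/(a*(a+1)) - Fv/(a*(a+1))"
        by (simp add: add_divide_distrib diff_divide_distrib)
      moreover have "((a+1)/(c*d))/(a*(a+1)) = 1/(c*d) * inverse a"
      proof -
        have p: "a * (c * d) + a * (a * (c * d)) > 0"
          using that assms(1,2) by (intro add_pos_pos mult_pos_pos) auto
        show ?thesis using that assms(1,2) p by (simp add: field_simps)
      qed
      ultimately show ?thesis by simp
    qed
    have "B (int (Suc n)) = ((real (Suc n) + 1) / c + (real k + 1)) / d - F (Suc n)"
      unfolding Bdec by (simp add: add.assoc)
    then show ?thesis unfolding G_def using gen[of "real (Suc n)" "real k + 1" "F (Suc n)"] by simp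
  qed
  have sumB: "(\<Sum>n<N. B (int (Suc n)) / (real (Suc n) * (real (Suc n) + 1)))
      = 1 / (c * d) * harm N + (real k + 1) / d * (1 - 1 / (real N + 1)) - (\<Sum>n<N. G n)" for N
    unfolding termeq sum_subtractf sum.distrib harm_altdef sum_distrib_left[symmetric] tele by simp
  define M :: nat where "M = nat \<lceil>4 / c\<rceil>"
  have ev: "\<forall>\<^sub>F m in at_top. norm (integral {1..real_of_int \<lfloor>c * real m\<rfloor>} (\<lambda>t. B \<lfloor>t\<rfloor> / t\<^sup>2)
      - ((1 / (c * d)) * (ln (real m) + ln c + euler_mascheroni) + (real k + 1) / d - suminf G))
      \<le> (2 * (real k + 5)) * norm (1 / real m)"
    using eventually_ge_at_top[of "Suc M"]
  proof eventually_elim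
    case (elim m)
    have m1: "real m \<ge> 1" using elim by simp
    have cm4: "c * real m \<ge> 4"
    proof -
      have "real m \<ge> 4 / c" using elim unfolding M_def by linarith
      then show ?thesis using assms(1) by (simp add: divide_simps mult.commute)
    qed
    define x where "x = nat \<lfloor>c * real m\<rfloor>"
    have xr: "real_of_int \<lfloor>c * real m\<rfloor> = real x" unfolding x_def using cm4 by simp
    have xlo: "c * real m - 1 < real x" "real x \<le> c * real m"
      using floor_correct[of "c*real m"] xr by auto
    have x3: "real x \<ge> 3" using xlo cm4 by linarith
    define N where "N = x - 1"
    have xN: "x = Suc N" using x3 unfolding N_def by simp
    have N1: "real N \<ge> 2" using x3 xN by simp
    have integ: "integral {1..real_of_int \<lfloor>c * real m\<rfloor>} (\<lambda>t. B \<lfloor>t\<rfloor> / t\<^sup>2)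
        = 1 / (c * d) * harm N + (real k + 1) / d * (1 - 1 / (real N + 1)) - (\<Sum>n<N. G n)"
      unfolding xr xN sumB[symmetric] by (rule integral_unique[OF step_int])
    define h where "h = harm N - ln (real m) - ln c - euler_mascheroni"
    define T where "T = suminf G - (\<Sum>n<N. G n)"
    define u where "u = 1 / real x"
    have u0: "u > 0" unfolding u_def using x3 by simp
    have Deq: "integral {1..real_of_int \<lfloor>c * real m\<rfloor>} (\<lambda>t. B \<lfloor>t\<rfloor> / t\<^sup>2)
      - ((1 / (c * d)) * (ln (real m) + ln c + euler_mascheroni) + (real k + 1) / d - suminf G)
      = 1 / (c * d) * h - (real k + 1) / d * u + T"
      unfolding integ h_def T_def u_def xN by (simp add: algebra_simps)
    have T0: "0 \<le> T" "T \<le> 2 * u" using tb(2,3)[of N] unfolding T_def u_def xN by (auto simp: add.commute)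
    have E1: "- (1 / (2 * real N)) \<le> harm N - ln (real N + 1) - euler_mascheroni"
             "harm N - ln (real N + 1) - euler_mascheroni \<le> 0"
    proof -
      have eqs: "Suc (N - 1) = N" "N - 1 + 2 = N + 1" "N - 1 + 1 = N" using N1 by auto
      have up: "euler_mascheroni \<le> harm N - ln (real N + 1) + 1/(2 * real N)"
        using euler_mascheroni_upper[of "N - 1"] unfolding eqs by (simp add: add.commute)
      have lo: "harm N - ln (real N + 1) + 1/(2 * (real N + 1)) \<le> euler_mascheroni"
        using euler_mascheroni_lower[of "N - 1"] unfolding eqs by (simp add: add.commute)
      have "1/(2 * (real N + 1)) \<ge> 0" by simp
      then show "- (1 / (2 * real N)) \<le> harm N - ln (real N + 1) - euler_mascheroni"
             "harm N - ln (real N + 1) - euler_mascheroni \<le> 0" using up lo by linarith+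
    qed
    have E2: "- u \<le> ln (real N + 1) - ln (real m) - ln c" "ln (real N + 1) - ln (real m) - ln c \<le> 0"
    proof -
      have lnm: "ln (real m) + ln c = ln (c * real m)" using m1 assms(1) by (simp add: ln_mult)
      have xx: "real N + 1 = real x" using xN by simp
      have "ln (real x) \<le> ln (c * real m)" using xlo x3 by simp
      moreover have "ln (c * real m / real x) \<le> c * real m / real x - 1"
        using ln_le_minus_one[of "c * real m / real x"] xlo x3 cm4 by simp
      moreover have "ln (c * real m / real x) = ln (c * real m) - ln (real x)"
        using x3 cm4 m1 assms(1) by (simp add: ln_div)
      moreover have "c * real m / real x - 1 \<le> u"
      proof -
        have "c * real m * real x \<le> (1 + real x) * real x"
          using xlo by (intro mult_right_mono) auto
        then show ?thesis using xlo x3 unfolding u_def by (simp add: field_simps)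
      qed
      ultimately show "- u \<le> ln (real N + 1) - ln (real m) - ln c" "ln (real N + 1) - ln (real m) - ln c \<le> 0"
        unfolding xx using lnm by linarith+
    qed
    have NU: "1 / (2 * real N) \<le> u" unfolding u_def using N1 xN by (simp add: field_simps)
    have habs: "\<bar>h\<bar> \<le> 2 * u" using E1 E2 NU unfolding h_def by linarith
    have cd: "0 < 1 / (c * d)" "1 / (c * d) \<le> 1" using assms(1,2) by (auto simp: field_simps)
      (smt (verit) mult_less_cancel_right1)
    have t1: "\<bar>1 / (c * d) * h\<bar> \<le> 2 * u"
    proof -
      have "\<bar>1 / (c * d) * h\<bar> = 1 / (c * d) * \<bar>h\<bar>" by (simp only: abs_mult abs_of_pos[OF cd(1)])
      also have "\<dots> \<le> 1 * \<bar>h\<bar>" using cd by (intro mult_right_mono) auto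
      finally show ?thesis using habs by simp
    qed
    have t2: "0 \<le> (real k + 1) / d * u" "(real k + 1) / d * u \<le> (real k + 1) * u"
    proof -
      have "(real k + 1) / d \<le> (real k + 1) / 1" using assms(2) by (intro divide_left_mono) auto
      then have kd: "(real k + 1) / d \<le> real k + 1" by simp
      show "(real k + 1) / d * u \<le> (real k + 1) * u"
        by (rule mult_right_mono[OF kd]) (use u0 in simp)
      show "0 \<le> (real k + 1) / d * u" using u0 assms(2) by simp
    qed
    have "norm (1 / (c * d) * h - (real k + 1) / d * u + T) \<le> (real k + 5) * u"
    proof -
      have gen: "\<bar>P - Q + T'\<bar> \<le> R + 4 * u'" if "\<bar>P\<bar> \<le> 2 * u'" "0 \<le> Q" "Q \<le> R" "0 \<le> T'" "T' \<le> 2 * u'"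
        for P Q R T' u' :: real using that by linarith
      have "(real k + 5) * u = (real k + 1) * u + 4 * u" by algebra
      then show ?thesis using gen[OF t1 t2 T0] by simp
    qed
    moreover have "u \<le> 2 * (1 / real m)"
    proof -
      have "real m \<le> c * real m" using assms(1) m1 by simp
      then have "real m \<le> real x * 2" using xlo cm4 by linarith
      then show ?thesis unfolding u_def using x3 m1 by (simp add: field_simps)
    qed
    ultimately have "norm (1 / (c * d) * h - (real k + 1) / d * u + T) \<le> (2 * (real k + 5)) * (1 / real m)"
    proof -
      assume a1: "norm (1 / (c * d) * h - (real k + 1) / d * u + T) \<le> (real k + 5) * u"
        and a2: "u \<le> 2 * (1 / real m)"
      have "(real k + 5) * u \<le> (real k + 5) * (2 * (1 / real m))"
        by (rule mult_left_mono[OF a2]) simp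
      also have "\<dots> = (2 * (real k + 5)) * (1 / real m)" by simp
      finally show ?thesis using a1 by linarith
    qed
    then show ?case unfolding Deq using m1 by simp
  qed
  show ?thesis
    unfolding inteq sumeq by (rule bigoI[OF ev])
qed

end
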